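(* For each integer $n\geq 2$, the Kneser graph $K(n,2)$ satisfies $\operatorname{tww}(K(n,2))=\operatorname{lb}_1(K(n,2))$, and this value equals $2(n-3)$ if $n\geq 5$ and $0$ otherwise.
   Context: All graphs are finite and simple. The Kneser graph $K(n,2)$ has vertex set the 2-element subsets of $\{1,\dots,n\}$, two vertices being adjacent iff they are disjoint. A trigraph is a graph whose edges are each colored red or black; a graph is viewed as a trigraph with all edges black; the red degree of a vertex is the number of red edges incident to it. For a partition $\mathcal{P}$ of $V(G)$, the quotient trigraph $G/\mathcal{P}$ has vertex set $\mathcal{P}$; two distinct parts $U,W$ are joined by a black edge if every pair $\{u,w\}$ with $u\in U,w\in W$ is a black edge of $G$, are non-adjacent if no such pair is an edge, and are joined by a red edge otherwise. A contraction sequence of an $N$-vertex trigraph $G$ is a sequence $\mathcal{P}_N,\dots,\mathcal{P}_1$ of partitions of $V(G)$ where $\mathcal{P}_N$ is the partition into singletons and each $\mathcal{P}_i$ arises from $\mathcal{P}_{i+1}$ by merging two parts; its width is the maximum red degree over all $G/\mathcal{P}_i$, and $\operatorname{tww}(G)$ is the minimum width of a contraction sequence. For $|V(G)|\geq 2$, $\operatorname{lb}_1(G)$ is the minimum over all 2-element subsets $\{u,v\}\subseteq V(G)$ of the maximum red degree of $G/\mathcal{P}$ where $\mathcal{P}$ has $\{u,v\}$ as its only non-singleton part; $\operatorname{lb}_1(G)=0$ if $|V(G)|=1$. *)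

theory Defs
  imports Main "HOL-Library.Disjoint_Sets"
begin

text \<open>A (simple) graph is given by a finite vertex set V and a symmetric irreflexive
adjacency relation E; as a trigraph all its edges are black.\<close>

definition red_adj :: "('a \<Rightarrow> 'a \<Rightarrow> bool) \<Rightarrow> 'a set \<Rightarrow> 'a set \<Rightarrow> bool" where
  "red_adj E U W \<longleftrightarrow> U \<noteq> W \<and> (\<exists>u\<in>U. \<exists>w\<in>W. E u w) \<and> \<not> (\<forall>u\<in>U. \<forall>w\<in>W. E u w)"

definition red_deg :: "('a \<Rightarrow> 'a \<Rightarrow> bool) \<Rightarrow> 'a set set \<Rightarrow> 'a set \<Rightarrow> nat" where
  "red_deg E P U = card {W \<in> P. red_adj E U W}"

definition max_red_deg :: "('a \<Rightarrow> 'a \<Rightarrow> bool) \<Rightarrow> 'a set set \<Rightarrow> nat" where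
  "max_red_deg E P = Max (insert 0 (red_deg E P ` P))"

definition singletons :: "'a set \<Rightarrow> 'a set set" where
  "singletons V = (\<lambda>x. {x}) ` V"

definition merge_step :: "'a set set \<Rightarrow> 'a set set \<Rightarrow> bool" where
  "merge_step P Q \<longleftrightarrow> (\<exists>A\<in>P. \<exists>B\<in>P. A \<noteq> B \<and> Q = insert (A \<union> B) (P - {A, B}))"

text \<open>A contraction sequence P_N, ..., P_1 as a list [P_N, ..., P_1] with N = |V|.\<close>
definition contraction_seq :: "'a set \<Rightarrow> 'a set set list \<Rightarrow> bool" where
  "contraction_seq V Ps \<longleftrightarrow> length Ps = card V \<and> length Ps > 0 \<and> Ps ! 0 = singletons V
     \<and> (\<forall>i. Suc i < length Ps \<longrightarrow> merge_step (Ps ! i) (Ps ! Suc i))"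

definition seq_width :: "('a \<Rightarrow> 'a \<Rightarrow> bool) \<Rightarrow> 'a set set list \<Rightarrow> nat" where
  "seq_width E Ps = Max ((\<lambda>P. max_red_deg E P) ` set Ps)"

definition tww :: "'a set \<Rightarrow> ('a \<Rightarrow> 'a \<Rightarrow> bool) \<Rightarrow> nat" where
  "tww V E = (LEAST w. \<exists>Ps. contraction_seq V Ps \<and> seq_width E Ps = w)"

definition pair_partition :: "'a set \<Rightarrow> 'a \<Rightarrow> 'a \<Rightarrow> 'a set set" where
  "pair_partition V u v = insert {u, v} (singletons (V - {u, v}))"

definition lb1 :: "'a set \<Rightarrow> ('a \<Rightarrow> 'a \<Rightarrow> bool) \<Rightarrow> nat" where
  "lb1 V E = (if card V \<le> 1 then 0 else
     Min {max_red_deg E (pair_partition V u v) | u v. u \<in> V \<and> v \<in> V \<and> u \<noteq> v})"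

definition kneser2_V :: "nat \<Rightarrow> nat set set" where
  "kneser2_V n = {S. S \<subseteq> {1..n} \<and> card S = 2}"

definition kneser2_E :: "nat set \<Rightarrow> nat set \<Rightarrow> bool" where
  "kneser2_E S T \<longleftrightarrow> S \<noteq> T \<and> S \<inter> T = {}"

end

theory Submission
  imports Defs
begin



definition ptn :: "'a set \<Rightarrow> 'a set set \<Rightarrow> bool" where
  "ptn V P \<longleftrightarrow> \<Union>P = V \<and> {} \<notin> P \<and> (\<forall>A\<in>P. \<forall>B\<in>P. A \<noteq> B \<longrightarrow> A \<inter> B = {})"

inductive reach :: "('a \<Rightarrow> 'a \<Rightarrow> bool) \<Rightarrow> nat \<Rightarrow> 'a set set \<Rightarrow> bool" for E w where
  fin: "card P = 1 \<Longrightarrow> max_red_deg E P \<le> w \<Longrightarrow> reach E w P"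
| stp: "merge_step P Q \<Longrightarrow> max_red_deg E P \<le> w \<Longrightarrow> reach E w Q \<Longrightarrow> reach E w P"

lemma merge_ptn:
  assumes "ptn V P" "merge_step P Q" "finite V"
  shows "ptn V Q \<and> card Q = card P - 1 \<and> finite P"
proof -
  obtain A B where AB: "A \<in> P" "B \<in> P" "A \<noteq> B" "Q = insert (A \<union> B) (P - {A, B})"
    using assms(2) unfolding merge_step_def by blast
  have fP: "finite P" using assms(1,3) unfolding ptn_def by (metis finite_UnionD)
  have ne: "A \<noteq> {}" "B \<noteq> {}" using AB assms(1) unfolding ptn_def by auto
  have nin: "A \<union> B \<notin> P - {A, B}"
  proof
    assume "A \<union> B \<in> P - {A, B}"
    then obtain C where C: "C \<in> P" "C \<noteq> A" "A \<subseteq> C" by blast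
    then have "A \<inter> C = {}" using AB assms(1) unfolding ptn_def by blast
    then show False using C ne by blast
  qed
  have "card Q = card (P - {A,B}) + 1" using AB nin fP by simp
  also have "card (P - {A,B}) = card P - 2" using AB fP by (simp add: card_Diff_subset)
  moreover have "card {A,B} \<le> card P" using AB fP by (intro card_mono) auto
  moreover have "card {A,B} = 2" using AB by simp
  ultimately have c: "card Q = card P - 1" by linarith
  have "ptn V Q" using assms(1) AB ne unfolding ptn_def by blast
  then show ?thesis using c fP by blast
qed


lemma reach_seq:
  assumes "reach E w P" "ptn V P" "finite V"
  shows "\<exists>Ps. length Ps = card P \<and> Ps \<noteq> [] \<and> Ps!0 = P \<and>
     (\<forall>i. Suc i < length Ps \<longrightarrow> merge_step (Ps!i) (Ps!Suc i)) \<and> (\<forall>Q\<in>set Ps. max_red_deg E Q \<le> w)"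
  using assms
proof (induction rule: reach.induct)
  case (fin P)
  then show ?case by (rule_tac x="[P]" in exI) auto
next
  case (stp P Q)
  have m: "ptn V Q" "card Q = card P - 1" "finite P" using merge_ptn[OF stp.prems(1) stp.hyps(1) stp.prems(2)] by auto
  obtain Ps where Ps: "length Ps = card Q" "Ps \<noteq> []" "Ps!0 = Q"
     "\<forall>i. Suc i < length Ps \<longrightarrow> merge_step (Ps!i) (Ps!Suc i)" "\<forall>Q\<in>set Ps. max_red_deg E Q \<le> w"
    using stp.IH m stp.prems by blast
  have "card Q \<noteq> 0" using Ps(1) Ps(2) by (metis length_0_conv)
  then have cl: "Suc (card Q) = card P" using m by linarith
  show ?case
  proof (rule exI[of _ "P # Ps"], intro conjI allI impI)
    show "length (P # Ps) = card P" using Ps cl by simp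
    fix i assume "Suc i < length (P # Ps)"
    then show "merge_step ((P # Ps) ! i) ((P # Ps) ! Suc i)"
      using Ps stp.hyps(1) by (cases i) auto
  next
    show "P # Ps \<noteq> []" by simp
  next
    show "(P # Ps) ! 0 = P" by simp
  next
    show "\<forall>Q\<in>set (P # Ps). max_red_deg E Q \<le> w" using Ps stp.hyps by simp
  qed
qed

lemma tww_le:
  assumes "reach E w (singletons V)" "finite V"
  shows "tww V E \<le> w" "\<exists>Ps. contraction_seq V Ps"
proof -
  have p: "ptn V (singletons V)" unfolding ptn_def singletons_def by auto
  have cs: "card (singletons V) = card V" unfolding singletons_def
    by (simp add: card_image)
  obtain Ps where Ps: "length Ps = card V" "Ps \<noteq> []" "Ps!0 = singletons V"
     "\<forall>i. Suc i < length Ps \<longrightarrow> merge_step (Ps!i) (Ps!Suc i)" "\<forall>Q\<in>set Ps. max_red_deg E Q \<le> w"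
    using reach_seq[OF assms(1) p assms(2)] cs by auto
  have "length Ps > 0" using Ps(2) by simp
  then have c: "contraction_seq V Ps" unfolding contraction_seq_def using Ps by simp
  have "seq_width E Ps \<le> w" unfolding seq_width_def using Ps by auto
  then show "tww V E \<le> w" unfolding tww_def using c
    by (metis (mono_tags, lifting) Least_le order_trans)
  show "\<exists>Ps. contraction_seq V Ps" using c by blast
qed

lemma red_deg_le_card:
  assumes "U \<in> P" "finite P"
  shows "red_deg E P U \<le> card P - 1"
proof -
  have "{W \<in> P. red_adj E U W} \<subseteq> P - {U}" unfolding red_adj_def by auto
  then have "red_deg E P U \<le> card (P - {U})" unfolding red_deg_def
    using assms by (intro card_mono) auto
  then show ?thesis using assms by simp
qed

lemma max_red_deg_le:
  assumes "finite P" "\<And>U. U \<in> P \<Longrightarrow> red_deg E P U \<le> w"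
  shows "max_red_deg E P \<le> w"
  unfolding max_red_deg_def using assms by (simp add: Max_le_iff)

lemma red_deg_le_max:
  assumes "finite P" "U \<in> P"
  shows "red_deg E P U \<le> max_red_deg E P"
  unfolding max_red_deg_def using assms by (simp add: Max_ge_iff)


lemma reach_inv:
  assumes "\<And>P Q. \<Phi> P \<Longrightarrow> ptn V P \<Longrightarrow> merge_step P Q \<Longrightarrow> \<Phi> Q"
    and "\<And>P. \<Phi> P \<Longrightarrow> ptn V P \<Longrightarrow> max_red_deg E P \<le> w"
    and "finite V" "V \<noteq> {}"
  shows "\<Phi> P \<Longrightarrow> ptn V P \<Longrightarrow> reach E w P"
proof (induction "card P" arbitrary: P rule: less_induct)
  case less
  have fP: "finite P" using less.prems assms(3) unfolding ptn_def by (metis finite_UnionD)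
  have "P \<noteq> {}" using less.prems assms(4) unfolding ptn_def by auto
  then have c0: "card P \<ge> 1" using fP by (simp add: Suc_leI card_gt_0_iff)
  show ?case
  proof (cases "card P = 1")
    case True
    then show ?thesis using assms(2) less.prems by (intro reach.fin) auto
  next
    case False
    then have "card P \<ge> 2" using c0 by linarith
    obtain A where A: "A \<in> P" using \<open>P \<noteq> {}\<close> by blast
    have "card (P - {A}) \<ge> 1" using A fP \<open>card P \<ge> 2\<close> by simp
    then have "P - {A} \<noteq> {}" by (metis card.empty not_one_le_zero)
    then obtain B where B: "B \<in> P" "B \<noteq> A" by blast
    have AB: "A \<in> P" "B \<in> P" "A \<noteq> B" using A B by auto
    define Q where "Q = insert (A \<union> B) (P - {A, B})"
    have ms: "merge_step P Q" unfolding merge_step_def Q_def using AB by blast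
    have m: "ptn V Q" "card Q = card P - 1" using merge_ptn[OF less.prems(2) ms assms(3)] by auto
    have "reach E w Q"
      using less.hyps[of Q] m c0 assms(1)[OF less.prems ms] by simp
    then show ?thesis using reach.stp[OF ms] assms(2) less.prems by blast
  qed
qed


lemma reach_few:
  assumes "finite V" "V \<noteq> {}" "ptn V P" "card P \<le> Suc w"
  shows "reach E w P"
proof -
  have fP: "\<And>P. ptn V P \<Longrightarrow> finite P" using assms(1) unfolding ptn_def by (metis finite_UnionD)
  show ?thesis
  proof (rule reach_inv[where \<Phi>="\<lambda>P. card P \<le> Suc w"])
    fix P Q assume "card P \<le> Suc w" "ptn V P" "merge_step P Q"
    then show "card Q \<le> Suc w" using merge_ptn[of V P Q] assms(1) by auto
  next
    fix P assume a: "card P \<le> Suc w" "ptn V P"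
    show "max_red_deg E P \<le> w"
    proof (rule max_red_deg_le)
      show "finite P" using fP a(2) .
      fix U assume "U \<in> P"
      then have "red_deg E P U \<le> card P - 1" using red_deg_le_card fP a(2) by blast
      then show "red_deg E P U \<le> w" using a(1) by linarith
    qed
  qed (use assms in auto)
qed


lemma reach_noedge:
  assumes "finite V" "V \<noteq> {}" "ptn V P" "\<forall>U\<in>P. \<forall>W\<in>P. U \<noteq> W \<longrightarrow> (\<forall>u\<in>U. \<forall>x\<in>W. \<not> E u x)"
  shows "reach E w P"
proof -
  have fP: "\<And>P. ptn V P \<Longrightarrow> finite P" using assms(1) unfolding ptn_def by (metis finite_UnionD)
  show ?thesis
  proof (rule reach_inv[where \<Phi>="\<lambda>P. \<forall>U\<in>P. \<forall>W\<in>P. U \<noteq> W \<longrightarrow> (\<forall>u\<in>U. \<forall>x\<in>W. \<not> E u x)"])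
    fix P Q assume a: "\<forall>U\<in>P. \<forall>W\<in>P. U \<noteq> W \<longrightarrow> (\<forall>u\<in>U. \<forall>x\<in>W. \<not> E u x)" "ptn V P" "merge_step P Q"
    then obtain A B where AB: "A \<in> P" "B \<in> P" "A \<noteq> B" "Q = insert (A \<union> B) (P - {A, B})"
      unfolding merge_step_def by blast
    have h: "\<And>U W u x. U\<in>P \<Longrightarrow> W\<in>P \<Longrightarrow> U\<noteq>W \<Longrightarrow> u\<in>U \<Longrightarrow> x\<in>W \<Longrightarrow> \<not>E u x"
      using a(1) by blast
    have q: "U \<in> Q \<Longrightarrow> U = A \<union> B \<or> (U \<in> P \<and> U \<noteq> A \<and> U \<noteq> B)" for U
      using AB(4) by auto
    show "\<forall>U\<in>Q. \<forall>W\<in>Q. U \<noteq> W \<longrightarrow> (\<forall>u\<in>U. \<forall>x\<in>W. \<not> E u x)"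
    proof (intro ballI impI)
      fix U W u x assume UW: "U \<in> Q" "W \<in> Q" "U \<noteq> W" "u \<in> U" "x \<in> W"
      show "\<not> E u x"
      proof (cases "U = A \<union> B")
        case True
        then have W: "W \<in> P" "W \<noteq> A" "W \<noteq> B" using q[OF UW(2)] UW(3) by auto
        show ?thesis
        proof (cases "u \<in> A")
          case True then show ?thesis using h[OF AB(1) W(1)] W(2) UW(5) by auto
        next
          case False then have "u \<in> B" using UW(4) \<open>U = A \<union> B\<close> by auto
          then show ?thesis using h[OF AB(2) W(1)] W(3) UW(5) by auto
        qed
      next
        case False
        then have U: "U \<in> P" "U \<noteq> A" "U \<noteq> B" using q[OF UW(1)] by auto
        show ?thesis
        proof (cases "W = A \<union> B")
          case True
          show ?thesis
          proof (cases "x \<in> A")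
            case True then show ?thesis using h[OF U(1) AB(1)] U(2) UW(4) by auto
          next
            case False then have "x \<in> B" using UW(5) \<open>W = A \<union> B\<close> by auto
            then show ?thesis using h[OF U(1) AB(2)] U(3) UW(4) by auto
          qed
        next
          case False
          then have "W \<in> P" using q[OF UW(2)] by auto
          then show ?thesis using h[OF U(1) \<open>W \<in> P\<close> UW(3) UW(4) UW(5)] by simp
        qed
      qed
    qed
  next
    fix P assume a: "\<forall>U\<in>P. \<forall>W\<in>P. U \<noteq> W \<longrightarrow> (\<forall>u\<in>U. \<forall>x\<in>W. \<not> E u x)" "ptn V P"
    have "red_deg E P U = 0" if "U \<in> P" for U
    proof -
      have "{W \<in> P. red_adj E U W} = {}" using a(1) that unfolding red_adj_def by blast
      then show ?thesis unfolding red_deg_def by (simp only: card.empty)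
    qed
    then show "max_red_deg E P \<le> w" by (intro max_red_deg_le) (use fP a in auto)
  qed (use assms in auto)
qed



definition fb :: "('a \<Rightarrow> 'l) \<Rightarrow> 'a set \<Rightarrow> 'l \<Rightarrow> 'a set" where
  "fb f V l = {v\<in>V. f v = l}"

definition fibs :: "('a \<Rightarrow> 'l) \<Rightarrow> 'a set \<Rightarrow> 'a set set" where
  "fibs f V = fb f V ` f ` V"

lemma ptn_fibs: "ptn V (fibs f V)"
  unfolding ptn_def fibs_def fb_def by auto

lemma fibs_cong: "\<forall>v\<in>V. f v = g v \<Longrightarrow> fibs f V = fibs g V"
proof -
  assume a: "\<forall>v\<in>V. f v = g v"
  then have "fb f V = fb g V" unfolding fb_def by (intro ext) auto
  moreover have "f ` V = g ` V" using a by auto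
  ultimately show ?thesis unfolding fibs_def by simp
qed

lemma fibs_inj: "inj_on f V \<Longrightarrow> fibs f V = singletons V"
proof -
  assume i: "inj_on f V"
  have "fb f V (f v) = {v}" if "v \<in> V" for v
    using i that unfolding fb_def inj_on_def by auto
  then show ?thesis unfolding fibs_def singletons_def image_comp comp_def by simp
qed

lemma merge_fibs:
  assumes "l1 \<noteq> l2" "l1 \<in> f ` V" "l2 \<in> f ` V" "\<forall>v\<in>V. g v = (if f v = l1 then l2 else f v)"
  shows "merge_step (fibs f V) (fibs g V)"
proof -
  let ?A = "fb f V l1" and ?B = "fb f V l2"
  have AB: "?A \<in> fibs f V" "?B \<in> fibs f V" unfolding fibs_def using assms by auto
  have ne: "?A \<noteq> ?B" using assms unfolding fb_def by auto
  have gV: "g ` V = f ` V - {l1}"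
  proof
    show "g ` V \<subseteq> f ` V - {l1}"
    proof
      fix y assume "y \<in> g ` V"
      then obtain v where v: "v \<in> V" "y = g v" by auto
      then show "y \<in> f ` V - {l1}" using assms by (cases "f v = l1") auto
    qed
  next
    show "f ` V - {l1} \<subseteq> g ` V"
    proof
      fix y assume "y \<in> f ` V - {l1}"
      then obtain v where v: "v \<in> V" "y = f v" "f v \<noteq> l1" by auto
      then have "g v = y" using assms by auto
      then show "y \<in> g ` V" using v(1) by (metis image_eqI)
    qed
  qed
  have g2: "fb g V l2 = ?A \<union> ?B" using assms unfolding fb_def by (auto split: if_splits)
  have go: "fb g V l = fb f V l" if "l \<noteq> l1" "l \<noteq> l2" for l
    using assms that unfolding fb_def by auto
  have injf: "fb f V l = fb f V l' \<Longrightarrow> l \<in> f ` V \<Longrightarrow> l = l'" for l l'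
    unfolding fb_def by auto
  have "fibs g V = insert (?A \<union> ?B) (fibs f V - {?A, ?B})"
  proof (rule set_eqI)
    fix X
    show "X \<in> fibs g V \<longleftrightarrow> X \<in> insert (?A \<union> ?B) (fibs f V - {?A, ?B})"
    proof
      assume "X \<in> fibs g V"
      then obtain l where l: "l \<in> g ` V" "X = fb g V l" unfolding fibs_def by auto
      show "X \<in> insert (?A \<union> ?B) (fibs f V - {?A, ?B})"
      proof (cases "l = l2")
        case True then show ?thesis using l g2 by simp
      next
        case False
        then have l1: "l \<noteq> l1" "l \<in> f ` V" using l gV by auto
        then have "X = fb f V l" using l go False by simp
        moreover have "X \<noteq> ?A" "X \<noteq> ?B" using injf l1 False \<open>X = fb f V l\<close> by metis+
        ultimately show ?thesis using l1 unfolding fibs_def by auto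
      qed
    next
      assume "X \<in> insert (?A \<union> ?B) (fibs f V - {?A, ?B})"
      then show "X \<in> fibs g V"
      proof
        assume "X = ?A \<union> ?B" then show ?thesis using g2 gV assms unfolding fibs_def by auto
      next
        assume "X \<in> fibs f V - {?A, ?B}"
        then obtain l where l: "l \<in> f ` V" "X = fb f V l" "l \<noteq> l1" "l \<noteq> l2" unfolding fibs_def by auto
        then show ?thesis using go gV unfolding fibs_def by auto
      qed
    qed
  qed
  then show ?thesis unfolding merge_step_def using AB ne by blast
qed

lemma red_fibs:
  assumes "finite V"
    and "\<And>l. l \<in> f ` V \<Longrightarrow> \<exists>C. finite C \<and> card C \<le> w \<and> (\<forall>l'\<in>f ` V. red_adj E (fb f V l) (fb f V l') \<longrightarrow> l' \<in> C)"
  shows "max_red_deg E (fibs f V) \<le> w"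
proof (rule max_red_deg_le)
  show "finite (fibs f V)" using assms(1) unfolding fibs_def by simp
  fix U assume "U \<in> fibs f V"
  then obtain l where l: "l \<in> f ` V" "U = fb f V l" unfolding fibs_def by auto
  obtain C where C: "finite C" "card C \<le> w" "\<forall>l'\<in>f ` V. red_adj E (fb f V l) (fb f V l') \<longrightarrow> l' \<in> C"
    using assms(2)[OF l(1)] by blast
  have "{W \<in> fibs f V. red_adj E U W} \<subseteq> fb f V ` C" using C l unfolding fibs_def by auto
  then have "red_deg E (fibs f V) U \<le> card (fb f V ` C)" unfolding red_deg_def
    using C by (intro card_mono) auto
  also have "\<dots> \<le> card C" using C by (simp add: card_image_le)
  finally show "red_deg E (fibs f V) U \<le> w" using C by simp
qed

lemma kV: "S \<in> kneser2_V n \<longleftrightarrow> (\<exists>a b. S = {a,b} \<and> 1 \<le> a \<and> a < b \<and> b \<le> n)"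
proof
  assume "S \<in> kneser2_V n"
  then have S: "S \<subseteq> {1..n}" "card S = 2" unfolding kneser2_V_def by auto
  then obtain x y where xy: "S = {x,y}" "x \<noteq> y" by (meson card_2_iff)
  show "\<exists>a b. S = {a,b} \<and> 1 \<le> a \<and> a < b \<and> b \<le> n"
  proof (cases "x < y")
    case True then show ?thesis using xy S by (intro exI[of _ x] exI[of _ y]) auto
  next
    case False then show ?thesis using xy S by (intro exI[of _ y] exI[of _ x]) auto
  qed
next
  assume "\<exists>a b. S = {a,b} \<and> 1 \<le> a \<and> a < b \<and> b \<le> n"
  then show "S \<in> kneser2_V n" unfolding kneser2_V_def by auto
qed

lemma finV: "finite (kneser2_V n)"
proof -
  have "kneser2_V n \<subseteq> Pow {1..n}" unfolding kneser2_V_def by auto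
  then show ?thesis by (rule finite_subset) simp
qed

lemma kE: "a < b \<Longrightarrow> c < d \<Longrightarrow> kneser2_E {a,b} {c,d} \<longleftrightarrow> (a\<noteq>c \<and> a\<noteq>d \<and> b\<noteq>c \<and> b\<noteq>d)"
  unfolding kneser2_E_def by auto

definition plab :: "(nat \<Rightarrow> nat \<Rightarrow> 'l) \<Rightarrow> nat set \<Rightarrow> 'l" where
  "plab h S = h (Min S) (Max S)"

lemma plab_pair: "a < b \<Longrightarrow> plab h {a,b} = h a b"
  unfolding plab_def by simp

lemma plab_real: "1 \<le> a \<Longrightarrow> a < b \<Longrightarrow> b \<le> n \<Longrightarrow> h a b \<in> plab h ` kneser2_V n"
  by (rule image_eqI[of _ _ "{a,b}"]) (auto simp: plab_pair kV)

lemma plab_img: "l \<in> plab h ` kneser2_V n \<Longrightarrow> \<exists>a b. 1 \<le> a \<and> a < b \<and> b \<le> n \<and> l = h a b"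
proof -
  assume "l \<in> plab h ` kneser2_V n"
  then obtain v where v: "v \<in> kneser2_V n" "l = plab h v" by auto
  then obtain a b where "v = {a,b}" "1 \<le> a" "a < b" "b \<le> n" using kV by blast
  then show ?thesis using v plab_pair by metis
qed

lemma plab_relabel:
  assumes "\<And>a b. 1 \<le> a \<Longrightarrow> a < b \<Longrightarrow> b \<le> n \<Longrightarrow> h2 a b = (if h1 a b = l1 then l2 else h1 a b)"
  shows "\<forall>v\<in>kneser2_V n. plab h2 v = (if plab h1 v = l1 then l2 else plab h1 v)"
  using assms by (auto simp: kV plab_pair)

lemma plab_red:
  assumes "red_adj kneser2_E (fb (plab h) (kneser2_V n) l) (fb (plab h) (kneser2_V n) l')"
  obtains a b c d a' b' c' d' where "1\<le>a" "a<b" "b\<le>n" "1\<le>c" "c<d" "d\<le>n" "1\<le>a'" "a'<b'" "b'\<le>n"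
     "1\<le>c'" "c'<d'" "d'\<le>n" "h a b = l" "h c d = l'" "h a' b' = l" "h c' d' = l'"
     "a\<noteq>c" "a\<noteq>d" "b\<noteq>c" "b\<noteq>d" "\<not>(a'\<noteq>c' \<and> a'\<noteq>d' \<and> b'\<noteq>c' \<and> b'\<noteq>d')" "l \<noteq> l'"
proof -
  let ?V = "kneser2_V n"
  from assms have ne: "fb (plab h) ?V l \<noteq> fb (plab h) ?V l'" unfolding red_adj_def by auto
  from assms obtain u x where ux: "u \<in> ?V" "x \<in> ?V" "plab h u = l" "plab h x = l'" "kneser2_E u x"
    unfolding red_adj_def fb_def by auto
  from assms obtain u' x' where ux': "u' \<in> ?V" "x' \<in> ?V" "plab h u' = l" "plab h x' = l'" "\<not> kneser2_E u' x'"
    unfolding red_adj_def fb_def by auto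
  have ll: "l \<noteq> l'" using ne by auto
  obtain a b where ab: "u = {a,b}" "1 \<le> a" "a < b" "b \<le> n" using ux(1) kV by blast
  obtain c d where cd: "x = {c,d}" "1 \<le> c" "c < d" "d \<le> n" using ux(2) kV by blast
  obtain a' b' where ab': "u' = {a',b'}" "1 \<le> a'" "a' < b'" "b' \<le> n" using ux'(1) kV by blast
  obtain c' d' where cd': "x' = {c',d'}" "1 \<le> c'" "c' < d'" "d' \<le> n" using ux'(2) kV by blast
  have e1: "a\<noteq>c \<and> a\<noteq>d \<and> b\<noteq>c \<and> b\<noteq>d" using ux(5) ab cd kE by blast
  have e2: "\<not>(a'\<noteq>c' \<and> a'\<noteq>d' \<and> b'\<noteq>c' \<and> b'\<noteq>d')" using ux'(5) ab' cd' kE by blast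
  have h1: "h a b = l" using ux(3) ab by (simp add: plab_pair)
  have h2: "h c d = l'" using ux(4) cd by (simp add: plab_pair)
  have h3: "h a' b' = l" using ux'(3) ab' by (simp add: plab_pair)
  have h4: "h c' d' = l'" using ux'(4) cd' by (simp add: plab_pair)
  show thesis
    by (rule that[of a b c d a' b' c' d']) (use ab cd ab' cd' e1 e2 ll h1 h2 h3 h4 in \<open>simp_all\<close>)
qed




datatype lb = Sg nat nat | Lb nat | Tp

definition labp :: "nat \<Rightarrow> nat set \<Rightarrow> nat \<Rightarrow> nat \<Rightarrow> lb" where
  "labp m D a b = (if m \<le> a then Tp else if b < m \<or> (b = m \<and> a \<notin> D) then Sg a b else Lb a)"

definition Cs :: "nat \<Rightarrow> nat \<Rightarrow> lb \<Rightarrow> lb set" where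
  "Cs m n l = (case l of Sg a b \<Rightarrow> if b < m then {} else Lb ` {1..<m} \<union> {Tp}
    | Lb i \<Rightarrow> Lb ` ({1..<m}-{i}) \<union> (\<lambda>j. Sg j m) ` ({1..<m}-{i}) \<union> (if m+2 \<le> n then {Tp} else {})
    | Tp \<Rightarrow> if m+2 \<le> n then Lb ` {1..<m} \<union> (\<lambda>j. Sg j m) ` {1..<m} else {})"

lemma labp_Tp: "labp m D a b = Tp \<longleftrightarrow> m \<le> a"
  unfolding labp_def by auto
lemma labp_Sg: "labp m D a b = Sg x y \<longleftrightarrow> a = x \<and> b = y \<and> a < m \<and> (b < m \<or> (b = m \<and> a \<notin> D))"
  unfolding labp_def by auto
lemma labp_Lb: "labp m D a b = Lb i \<longleftrightarrow> a = i \<and> a < m \<and> m \<le> b \<and> (b = m \<longrightarrow> a \<in> D)"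
  unfolding labp_def by auto

lemma key:
  assumes "2 \<le> m" "m < n" "D \<subseteq> {1..<m}"
   "1\<le>a" "a<b" "b\<le>n" "1\<le>c" "c<d" "d\<le>n" "1\<le>a'" "a'<b'" "b'\<le>n" "1\<le>c'" "c'<d'" "d'\<le>n"
   "labp m D a' b' = labp m D a b" "labp m D c' d' = labp m D c d"
   "a\<noteq>c" "a\<noteq>d" "b\<noteq>c" "b\<noteq>d" "\<not>(a'\<noteq>c' \<and> a'\<noteq>d' \<and> b'\<noteq>c' \<and> b'\<noteq>d')"
   "labp m D a b \<noteq> labp m D c d"
  shows "labp m D c d \<in> Cs m n (labp m D a b)"
proof (cases "labp m D a b")
  case (Sg x y)
  then have s: "a = x" "b = y" "a' = x" "b' = y" "a < m" "b < m \<or> (b = m \<and> a \<notin> D)"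
    using assms(16)[unfolded Sg] Sg unfolding labp_Sg by auto
  show ?thesis
  proof (cases "labp m D c d")
    case (Sg x' y')
    then have "c = x'" "d = y'" "c' = x'" "d' = y'" using assms(17)[unfolded Sg] Sg unfolding labp_Sg by auto
    then show ?thesis using s assms by auto
  next
    case (Lb i)
    then have t: "c = i" "c' = i" "i < m" "m \<le> d" "m \<le> d'" "d = m \<longrightarrow> i \<in> D" "d' = m \<longrightarrow> i \<in> D"
      using assms(17)[unfolded Lb] Lb unfolding labp_Lb by auto
    show ?thesis using s t assms unfolding Cs_def Sg Lb by auto
  next
    case Tp
    then have t: "m \<le> c" "m \<le> c'" using assms(17)[unfolded Tp] Tp unfolding labp_Tp by auto
    show ?thesis using s t assms unfolding Cs_def Sg Tp by auto
  qed
next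
  case (Lb i)
  then have s: "a = i" "a' = i" "i < m" "m \<le> b" "m \<le> b'" "b = m \<longrightarrow> i \<in> D" "b' = m \<longrightarrow> i \<in> D"
    using assms(16)[unfolded Lb] Lb unfolding labp_Lb by auto
  show ?thesis
  proof (cases "labp m D c d")
    case (Sg x' y')
    then have t: "c = x'" "d = y'" "c' = x'" "d' = y'" "c < m" "d < m \<or> (d = m \<and> c \<notin> D)"
      using assms(17)[unfolded Sg] Sg unfolding labp_Sg by auto
    show ?thesis using s t assms unfolding Cs_def Sg Lb by auto
  next
    case (Lb j)
    then have t: "c = j" "c' = j" "j < m" using assms(17)[unfolded Lb] Lb unfolding labp_Lb by auto
    show ?thesis using s t assms unfolding Cs_def \<open>labp m D a b = Lb i\<close> Lb by auto
  next
    case Tp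
    then have t: "m \<le> c" "m \<le> c'" using assms(17)[unfolded Tp] Tp unfolding labp_Tp by auto
    show ?thesis using s t assms unfolding Cs_def \<open>labp m D a b = Lb i\<close> Tp by auto
  qed
next
  case Tp
  then have s: "m \<le> a" "m \<le> a'" using assms(16)[unfolded Tp] Tp unfolding labp_Tp by auto
  show ?thesis
  proof (cases "labp m D c d")
    case (Sg x' y')
    then have t: "c = x'" "d = y'" "c' = x'" "d' = y'" "c < m" "d < m \<or> (d = m \<and> c \<notin> D)"
      using assms(17)[unfolded Sg] Sg unfolding labp_Sg by auto
    show ?thesis using s t assms unfolding Cs_def Sg Tp by auto
  next
    case (Lb j)
    then have t: "c = j" "c' = j" "j < m" "m \<le> d" "m \<le> d'" using assms(17)[unfolded Lb] Lb unfolding labp_Lb by auto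
    show ?thesis using s t assms unfolding Cs_def Lb Tp by auto
  next
    case Tp
    then show ?thesis using assms \<open>labp m D a b = Tp\<close> by simp
  qed
qed

lemma cardCs:
  assumes "2 \<le> m" "m < n" "5 \<le> n" "1\<le>a" "a<b" "b\<le>n"
  shows "finite (Cs m n (labp m D a b)) \<and> card (Cs m n (labp m D a b)) \<le> 2*(n-3)"
proof (cases "m \<le> a")
  case True
  then have l: "labp m D a b = Tp" unfolding labp_def by simp
  show ?thesis
  proof (cases "m + 2 \<le> n")
    case True
    have "card (Lb ` {1..<m} \<union> (\<lambda>j. Sg j m) ` {1..<m}) \<le> card (Lb ` {1..<m}) + card ((\<lambda>j. Sg j m) ` {1..<m})"
      by (rule card_Un_le)
    also have "\<dots> \<le> (m - 1) + (m - 1)"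
      by (intro add_mono) (metis card_atLeastLessThan card_image_le finite_atLeastLessThan)+
    finally show ?thesis using True l unfolding Cs_def by simp
  next
    case False then show ?thesis using l unfolding Cs_def by simp
  qed
next
  case False
  note F = False
  show ?thesis
  proof (cases "b < m \<or> (b = m \<and> a \<notin> D)")
    case True
    then have l: "labp m D a b = Sg a b" using False unfolding labp_def by simp
    have "card (Lb ` {1..<m} \<union> {Tp}) \<le> card (Lb ` {1..<m}) + card {Tp}"
      by (rule card_Un_le)
    also have "\<dots> \<le> (m - 1) + 1"
      by (intro add_mono) (metis card_atLeastLessThan card_image_le finite_atLeastLessThan, simp)
    finally have "card (Lb ` {1..<m} \<union> {Tp}) \<le> 2*(n-3)" using assms by linarith
    then show ?thesis using l True unfolding Cs_def by simp
  next
    case False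
    then have l: "labp m D a b = Lb a" using F unfolding labp_def by simp
    have ca: "card ({1..<m} - {a}) = m - 2" using F assms by simp
    have "card (Lb ` ({1..<m}-{a}) \<union> (\<lambda>j. Sg j m) ` ({1..<m}-{a}) \<union> (if m+2 \<le> n then {Tp} else {}))
       \<le> card (Lb ` ({1..<m}-{a})) + card ((\<lambda>j. Sg j m) ` ({1..<m}-{a})) + card (if m+2 \<le> n then {Tp} else {})"
      by (meson add_mono card_Un_le le_refl order_trans)
    also have "\<dots> \<le> (m - 2) + (m - 2) + (if m+2 \<le> n then 1 else 0)"
      by (intro add_mono) (metis ca card_image_le finite_Diff finite_atLeastLessThan, metis ca card_image_le finite_Diff finite_atLeastLessThan, simp)
    finally show ?thesis using l assms unfolding Cs_def by (simp split: if_splits)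
  qed
qed

definition st :: "nat \<Rightarrow> nat \<Rightarrow> nat set \<Rightarrow> nat set set set" where
  "st n m D = fibs (plab (labp m D)) (kneser2_V n)"

lemma st_red:
  assumes "2 \<le> m" "m < n" "5 \<le> n" "D \<subseteq> {1..<m}"
  shows "max_red_deg kneser2_E (st n m D) \<le> 2*(n-3)"
  unfolding st_def
proof (rule red_fibs[OF finV])
  fix l assume lV: "l \<in> plab (labp m D) ` kneser2_V n"
  obtain a b where ab: "1 \<le> a" "a < b" "b \<le> n" "l = labp m D a b" using plab_img[OF lV] by blast
  show "\<exists>C. finite C \<and> card C \<le> 2*(n-3) \<and> (\<forall>l'\<in>plab (labp m D) ` kneser2_V n.
     red_adj kneser2_E (fb (plab (labp m D)) (kneser2_V n) l) (fb (plab (labp m D)) (kneser2_V n) l') \<longrightarrow> l' \<in> C)"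
  proof (intro exI[of _ "Cs m n l"] conjI ballI impI)
    show "finite (Cs m n l)" "card (Cs m n l) \<le> 2*(n-3)" using cardCs[OF assms(1-3) ab(1-3)] ab by auto
    fix l' assume "red_adj kneser2_E (fb (plab (labp m D)) (kneser2_V n) l) (fb (plab (labp m D)) (kneser2_V n) l')"
    then obtain a b c d a' b' c' d' where
      r: "1\<le>a" "a<b" "b\<le>n" "1\<le>c" "c<d" "d\<le>n" "1\<le>a'" "a'<b'" "b'\<le>n"
     "1\<le>c'" "c'<d'" "d'\<le>n" "labp m D a b = l" "labp m D c d = l'" "labp m D a' b' = l" "labp m D c' d' = l'"
     "a\<noteq>c" "a\<noteq>d" "b\<noteq>c" "b\<noteq>d" "\<not>(a'\<noteq>c' \<and> a'\<noteq>d' \<and> b'\<noteq>c' \<and> b'\<noteq>d')" "l \<noteq> l'"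
      by (rule plab_red)
    have "labp m D c d \<in> Cs m n (labp m D a b)"
      by (rule key[OF assms(1,2,4) r(1-12)]) (use r in auto)
    then show "l' \<in> Cs m n l" by (simp only: r(13) r(14))
  qed
qed


lemma st_start:
  assumes "2 \<le> n"
  shows "st n (n-1) {} = singletons (kneser2_V n)"
  unfolding st_def
proof (rule fibs_inj)
  show "inj_on (plab (labp (n - 1) {})) (kneser2_V n)"
  proof (rule inj_onI)
    fix x y assume xy: "x \<in> kneser2_V n" "y \<in> kneser2_V n" "plab (labp (n - 1) {}) x = plab (labp (n - 1) {}) y"
    obtain a b where ab: "x = {a,b}" "1 \<le> a" "a < b" "b \<le> n" using xy(1) kV by blast
    obtain c d where cd: "y = {c,d}" "1 \<le> c" "c < d" "d \<le> n" using xy(2) kV by blast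
    have "labp (n - 1) {} a b = labp (n - 1) {} c d" using xy(3) ab cd by (simp add: plab_pair)
    then have "a = c \<and> b = d" using ab cd unfolding labp_def by (auto split: if_splits)
    then show "x = y" using ab cd by simp
  qed
qed

lemma st_step1:
  assumes "2 \<le> m" "m < n" "D \<subseteq> {1..<m}" "i \<in> {1..<m}" "i \<notin> D"
  shows "merge_step (st n m D) (st n m (insert i D))"
  unfolding st_def
proof (rule merge_fibs[of "Sg i m" "Lb i"])
  show "Sg i m \<noteq> Lb i" by simp
  have "labp m D i m = Sg i m" using assms unfolding labp_def by auto
  then show "Sg i m \<in> plab (labp m D) ` kneser2_V n"
    using plab_real[of i m n "labp m D"] assms by simp
  have "labp m D i n = Lb i" using assms unfolding labp_def by auto
  then show "Lb i \<in> plab (labp m D) ` kneser2_V n"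
    using plab_real[of i n n "labp m D"] assms by simp
  show "\<forall>v\<in>kneser2_V n. plab (labp m (insert i D)) v =
      (if plab (labp m D) v = Sg i m then Lb i else plab (labp m D) v)"
    by (rule plab_relabel) (use assms in \<open>auto simp: labp_def\<close>)
qed

lemma st_step2:
  assumes "3 \<le> m" "m < n"
  shows "merge_step (st n m {1..<m}) (st n (m-1) {})"
  unfolding st_def
proof (rule merge_fibs[of "Lb (m-1)" "Tp"])
  show "Lb (m-1) \<noteq> Tp" by simp
  have "labp m {1..<m} (m-1) n = Lb (m-1)" using assms unfolding labp_def by auto
  then show "Lb (m-1) \<in> plab (labp m {1..<m}) ` kneser2_V n"
    using plab_real[of "m-1" n n "labp m {1..<m}"] assms by simp
  have "labp m {1..<m} m n = Tp" using assms unfolding labp_def by auto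
  then show "Tp \<in> plab (labp m {1..<m}) ` kneser2_V n"
    using plab_real[of m n n "labp m {1..<m}"] assms by simp
  show "\<forall>v\<in>kneser2_V n. plab (labp (m-1) {}) v =
      (if plab (labp m {1..<m}) v = Lb (m-1) then Tp else plab (labp m {1..<m}) v)"
    by (rule plab_relabel) (use assms in \<open>auto simp: labp_def\<close>)
qed

lemma Vne: "2 \<le> n \<Longrightarrow> kneser2_V n \<noteq> {}"
proof -
  assume "2 \<le> n"
  then have "{1::nat,2} \<in> kneser2_V n" unfolding kneser2_V_def by auto
  then show ?thesis by auto
qed


lemma st_end:
  assumes "5 \<le> n" "D \<subseteq> {1..<2}"
  shows "reach kneser2_E (2*(n-3)) (st n 2 D)"
proof (rule reach_few[OF finV Vne])
  show "ptn (kneser2_V n) (st n 2 D)" unfolding st_def by (rule ptn_fibs)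
  have "plab (labp 2 D) ` kneser2_V n \<subseteq> {Sg 1 2, Lb 1, Tp}"
  proof
    fix l assume lV: "l \<in> plab (labp 2 D) ` kneser2_V n"
    obtain a b where "1 \<le> a" "a < b" "b \<le> n" "l = labp 2 D a b" using plab_img[OF lV] by blast
    then show "l \<in> {Sg 1 2, Lb 1, Tp}" unfolding labp_def by auto
  qed
  then have "card (plab (labp 2 D) ` kneser2_V n) \<le> card {Sg 1 2, Lb 1, Tp}"
    by (intro card_mono) auto
  also have "card {Sg 1 2, Lb 1, Tp} = 3" by simp
  finally have c3: "card (plab (labp 2 D) ` kneser2_V n) \<le> 3" .
  have "card (st n 2 D) \<le> card (plab (labp 2 D) ` kneser2_V n)" unfolding st_def fibs_def
    by (rule card_image_le) (simp add: finV)
  then have "card (st n 2 D) \<le> 3" using c3 by linarith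
  then show "card (st n 2 D) \<le> Suc (2*(n-3))" using assms by simp
qed (use assms in auto)

lemma st_fill:
  assumes "5 \<le> n" "2 \<le> m" "m < n" "reach kneser2_E (2*(n-3)) (st n m {1..<m})"
  shows "\<forall>D. D \<subseteq> {1..<m} \<longrightarrow> card ({1..<m} - D) = k \<longrightarrow> reach kneser2_E (2*(n-3)) (st n m D)"
proof (induction k)
  case 0
  show ?case
  proof (intro allI impI)
    fix D assume D: "D \<subseteq> {1..<m}" "card ({1..<m} - D) = 0"
    then have "{1..<m} - D = {}" by simp
    then have "D = {1..<m}" using D(1) by blast
    then show "reach kneser2_E (2*(n-3)) (st n m D)" using assms(4) by simp
  qed
next
  case (Suc k)
  show ?case
  proof (intro allI impI)
    fix D assume D: "D \<subseteq> {1..<m}" "card ({1..<m} - D) = Suc k"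
    then have "{1..<m} - D \<noteq> {}" by (metis card.empty nat.simps(3))
    then obtain i where i: "i \<in> {1..<m}" "i \<notin> D" by blast
    have D': "insert i D \<subseteq> {1..<m}" using D(1) i by blast
    have "{1..<m} - insert i D = ({1..<m} - D) - {i}" by blast
    then have "card ({1..<m} - insert i D) = k" using D(2) i by simp
    then have "reach kneser2_E (2*(n-3)) (st n m (insert i D))" using Suc.IH[rule_format, OF D'] by simp
    then show "reach kneser2_E (2*(n-3)) (st n m D)"
      by (rule reach.stp[OF st_step1[OF assms(2,3) D(1) i] st_red[OF assms(2,3,1) D(1)]])
  qed
qed

lemma st_full:
  assumes "5 \<le> n"
  shows "j + 2 < n \<Longrightarrow> reach kneser2_E (2*(n-3)) (st n (j+2) {1..<j+2})"
proof (induction j)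
  case 0
  have e: "(0::nat)+2 = 2" by simp
  have "reach kneser2_E (2*(n-3)) (st n 2 {1..<2})" by (rule st_end[OF assms]) simp
  then show ?case unfolding e .
next
  case (Suc j)
  have jn: "j + 2 < n" using Suc.prems by simp
  have r: "reach kneser2_E (2*(n-3)) (st n (j+2) {1..<j+2})" using Suc.IH[OF jn] .
  have f: "\<forall>D. D \<subseteq> {1..<j+2} \<longrightarrow> card ({1..<j+2} - D) = card ({1..<j+2} - {}) \<longrightarrow> reach kneser2_E (2*(n-3)) (st n (j+2) D)"
    by (rule st_fill[OF assms _ jn r]) simp
  have "reach kneser2_E (2*(n-3)) (st n (j+2) {})"
    using f[rule_format, of "{}"] by simp
  moreover have "Suc j + 2 - 1 = j + 2" by simp
  ultimately have r2: "reach kneser2_E (2*(n-3)) (st n (Suc j + 2 - 1) {})" by simp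
  have ms: "merge_step (st n (Suc j + 2) {1..<Suc j + 2}) (st n (Suc j + 2 - 1) {})"
    by (rule st_step2) (use Suc.prems in simp_all)
  have mr: "max_red_deg kneser2_E (st n (Suc j + 2) {1..<Suc j + 2}) \<le> 2*(n-3)"
    by (rule st_red) (use Suc.prems assms in auto)
  show ?case by (rule reach.stp[OF ms mr r2])
qed

lemma st_reach:
  assumes "5 \<le> n"
  shows "reach kneser2_E (2*(n-3)) (st n (n-1) {})"
proof -
  have "n - 3 + 2 < n" using assms by simp
  then have r: "reach kneser2_E (2*(n-3)) (st n (n-3+2) {1..<n-3+2})" by (rule st_full[OF assms])
  have e: "n - 3 + 2 = n - 1" using assms by simp
  have f: "\<forall>D. D \<subseteq> {1..<n-1} \<longrightarrow> card ({1..<n-1} - D) = card ({1..<n-1} - {}) \<longrightarrow> reach kneser2_E (2*(n-3)) (st n (n-1) D)"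
    by (rule st_fill[OF assms _ _ r[unfolded e]]) (use assms in simp_all)
  show ?thesis using f[rule_format, of "{}"] by simp
qed

lemma upper5:
  assumes "5 \<le> n"
  shows "tww (kneser2_V n) kneser2_E \<le> 2*(n-3)" "\<exists>Ps. contraction_seq (kneser2_V n) Ps"
proof -
  have R: "reach kneser2_E (2*(n-3)) (singletons (kneser2_V n))"
    using st_reach[OF assms] st_start[of n] assms by simp
  show "tww (kneser2_V n) kneser2_E \<le> 2*(n-3)" "\<exists>Ps. contraction_seq (kneser2_V n) Ps"
    using tww_le[OF R finV] by auto
qed



lemma ms_single:
  assumes "merge_step (singletons V) Q"
  shows "\<exists>u v. u \<in> V \<and> v \<in> V \<and> u \<noteq> v \<and> Q = pair_partition V u v"
proof -
  obtain A B where AB: "A \<in> singletons V" "B \<in> singletons V" "A \<noteq> B" "Q = insert (A \<union> B) (singletons V - {A, B})"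
    using assms unfolding merge_step_def by blast
  obtain u where u: "u \<in> V" "A = {u}" using AB(1) unfolding singletons_def by auto
  obtain v where v: "v \<in> V" "B = {v}" using AB(2) unfolding singletons_def by auto
  have "singletons V - {{u}, {v}} = singletons (V - {u, v})" unfolding singletons_def by auto
  then have "Q = pair_partition V u v" unfolding pair_partition_def using AB(4) u v by auto
  then show ?thesis using u v AB(3) by blast
qed

lemma tww_ge_lb1:
  assumes "finite V" "2 \<le> card V" "\<exists>Ps. contraction_seq V Ps"
  shows "lb1 V E \<le> tww V E"
proof -
  have ex: "\<exists>w Ps. contraction_seq V Ps \<and> seq_width E Ps = w" using assms(3) by blast
  obtain Ps where Ps: "contraction_seq V Ps" "seq_width E Ps = tww V E"
    using LeastI_ex[OF ex] unfolding tww_def by blast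
  have len: "length Ps = card V" "Ps ! 0 = singletons V" "\<forall>i. Suc i < length Ps \<longrightarrow> merge_step (Ps ! i) (Ps ! Suc i)"
    using Ps(1) unfolding contraction_seq_def by auto
  have "Suc 0 < length Ps" using len assms(2) by simp
  then have "merge_step (Ps ! 0) (Ps ! Suc 0)" using len(3) by blast
  then obtain u v where uv: "u \<in> V" "v \<in> V" "u \<noteq> v" "Ps ! 1 = pair_partition V u v"
    using ms_single len(2) by fastforce
  have "Ps ! 1 \<in> set Ps" using \<open>Suc 0 < length Ps\<close> by simp
  then have "max_red_deg E (Ps ! 1) \<le> seq_width E Ps" unfolding seq_width_def
    by (intro Max_ge) auto
  moreover have "lb1 V E \<le> max_red_deg E (pair_partition V u v)"
  proof -
    let ?S = "{max_red_deg E (pair_partition V u v) | u v. u \<in> V \<and> v \<in> V \<and> u \<noteq> v}"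
    have "?S \<subseteq> (\<lambda>(u,v). max_red_deg E (pair_partition V u v)) ` (V \<times> V)" by auto
    then have fS: "finite ?S" using assms(1) by (meson finite_SigmaI finite_imageI finite_subset)
    have "max_red_deg E (pair_partition V u v) \<in> ?S" using uv by blast
    then have "Min ?S \<le> max_red_deg E (pair_partition V u v)" using fS by (intro Min_le)
    then show ?thesis unfolding lb1_def using assms(2) by simp
  qed
  ultimately show ?thesis using Ps(2) uv(4) by simp
qed

lemma card_V2:
  assumes "3 \<le> n" shows "2 \<le> card (kneser2_V n)"
proof -
  have "{{1,2},{1,3}} \<subseteq> kneser2_V n" using assms unfolding kneser2_V_def by auto
  then have "card {{1::nat,2},{1,3}} \<le> card (kneser2_V n)" using finV by (intro card_mono)
  moreover have "card {{1::nat,2},{1,3}} = 2" by (simp add: doubleton_eq_iff)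
  ultimately show ?thesis by simp
qed

lemma pp_fam:
  assumes "Y \<subseteq> S" "S \<subseteq> {1..n}" "U \<in> P" "finite P"
    and "\<And>y x. y \<in> Y \<Longrightarrow> x \<in> {1..n} - S \<Longrightarrow> {{y,x}} \<in> P \<and> red_adj E U {{y,x}}"
  shows "card Y * (n - card S) \<le> red_deg E P U"
proof -
  let ?X = "{1..n} - S"
  let ?f = "\<lambda>(y::nat,x::nat). {{y,x}}"
  have fS: "finite S" using assms(2) finite_subset by blast
  have fY: "finite Y" using assms(1) fS finite_subset by blast
  have inj: "inj_on ?f (Y \<times> ?X)"
  proof (rule inj_onI)
    fix p q assume pq: "p \<in> Y \<times> ?X" "q \<in> Y \<times> ?X" "?f p = ?f q"
    obtain y x where p: "p = (y,x)" by (cases p)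
    obtain y' x' where q: "q = (y',x')" by (cases q)
    have "{y,x} = {y',x'}" using pq(3) p q by simp
    moreover have "y \<in> S" "y' \<in> S" "x \<notin> S" "x' \<notin> S" using pq p q assms(1) by auto
    ultimately show "p = q" using p q by (auto simp: doubleton_eq_iff)
  qed
  have cX: "card ?X = n - card S" using assms(2) fS by (simp add: card_Diff_subset)
  have "card (?f ` (Y \<times> ?X)) = card Y * (n - card S)"
    using card_image[OF inj] cX by (simp add: card_cartesian_product)
  moreover have "?f ` (Y \<times> ?X) \<subseteq> {W \<in> P. red_adj E U W}" using assms(5) by auto
  ultimately show ?thesis unfolding red_deg_def using assms(4)
    by (metis (no_types, lifting) card_mono finite_subset mem_Collect_eq subsetI)
qed



lemma pp_basic:
  assumes "u \<in> kneser2_V n" "v \<in> kneser2_V n" "u \<noteq> v"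
  shows "{u,v} \<in> pair_partition (kneser2_V n) u v" "finite (pair_partition (kneser2_V n) u v)"
  unfolding pair_partition_def singletons_def using finV by auto

lemma pp_inter:
  assumes "p \<noteq> q" "p \<noteq> r" "q \<noteq> r" "p \<in> {1..n}" "q \<in> {1..n}" "r \<in> {1..n}"
    and "u = {p,q}" "v = {p,r}"
  shows "2 * (n - 3) \<le> red_deg kneser2_E (pair_partition (kneser2_V n) u v) {u,v}"
proof -
  let ?V = "kneser2_V n"
  have uV: "u \<in> ?V" "v \<in> ?V" "u \<noteq> v" using assms unfolding kneser2_V_def by (auto simp: doubleton_eq_iff)
  have c: "card {q,r} * (n - card {p,q,r}) \<le> red_deg kneser2_E (pair_partition ?V u v) {u,v}"
  proof (rule pp_fam[where S="{p,q,r}"])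
    show "{q, r} \<subseteq> {p, q, r}" by auto
    show "{p, q, r} \<subseteq> {1..n}" using assms by auto
    show "{u,v} \<in> pair_partition ?V u v" "finite (pair_partition ?V u v)" using pp_basic[OF uV] by auto
    fix y x assume yx: "y \<in> {q,r}" "x \<in> {1..n} - {p,q,r}"
    have xV: "{y,x} \<in> ?V" using yx assms unfolding kneser2_V_def by auto
    have ne: "{y,x} \<noteq> u" "{y,x} \<noteq> v" using yx assms by (auto simp: doubleton_eq_iff)
    show "{{y,x}} \<in> pair_partition ?V u v \<and> red_adj kneser2_E {u,v} {{y,x}}"
    proof
      show "{{y,x}} \<in> pair_partition ?V u v" unfolding pair_partition_def singletons_def using xV ne by auto
      have d: "{u,v} \<noteq> {{y,x}}" using uV(3) by (auto simp: doubleton_eq_iff)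
      show "red_adj kneser2_E {u,v} {{y,x}}"
      proof (cases "y = q")
        case True
        have "kneser2_E v {y,x}" using True yx assms unfolding kneser2_E_def by auto
        moreover have "\<not> kneser2_E u {y,x}" using True assms unfolding kneser2_E_def by auto
        ultimately show ?thesis using d unfolding red_adj_def by auto
      next
        case False
        then have "y = r" using yx by auto
        have "kneser2_E u {y,x}" using \<open>y = r\<close> yx assms unfolding kneser2_E_def by auto
        moreover have "\<not> kneser2_E v {y,x}" using \<open>y = r\<close> assms unfolding kneser2_E_def by auto
        ultimately show ?thesis using d unfolding red_adj_def by auto
      qed
    qed
  qed
  moreover have "card {q,r} = 2" "card {p,q,r} = 3" using assms by auto
  ultimately show ?thesis by simp
qed

lemma pp_disj:
  assumes "a \<noteq> b" "a \<noteq> c" "a \<noteq> d" "b \<noteq> c" "b \<noteq> d" "c \<noteq> d"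
    "a \<in> {1..n}" "b \<in> {1..n}" "c \<in> {1..n}" "d \<in> {1..n}" "5 \<le> n"
    and "u = {a,b}" "v = {c,d}"
  shows "2 * (n - 3) \<le> red_deg kneser2_E (pair_partition (kneser2_V n) u v) {u,v}"
proof -
  let ?V = "kneser2_V n"
  have uV: "u \<in> ?V" "v \<in> ?V" "u \<noteq> v" using assms unfolding kneser2_V_def by (auto simp: doubleton_eq_iff)
  have c: "card {a,b,c,d} * (n - card {a,b,c,d}) \<le> red_deg kneser2_E (pair_partition ?V u v) {u,v}"
  proof (rule pp_fam[where S="{a,b,c,d}"])
    show "{a,b,c,d} \<subseteq> {a,b,c,d}" by auto
    show "{a,b,c,d} \<subseteq> {1..n}" using assms by auto
    show "{u,v} \<in> pair_partition ?V u v" "finite (pair_partition ?V u v)" using pp_basic[OF uV] by auto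
    fix y x assume yx: "y \<in> {a,b,c,d}" "x \<in> {1..n} - {a,b,c,d}"
    have xV: "{y,x} \<in> ?V" using yx assms unfolding kneser2_V_def by auto
    have ne: "{y,x} \<noteq> u" "{y,x} \<noteq> v" using yx assms by (auto simp: doubleton_eq_iff)
    show "{{y,x}} \<in> pair_partition ?V u v \<and> red_adj kneser2_E {u,v} {{y,x}}"
    proof
      show "{{y,x}} \<in> pair_partition ?V u v" unfolding pair_partition_def singletons_def using xV ne by auto
      have d: "{u,v} \<noteq> {{y,x}}" using uV(3) by (auto simp: doubleton_eq_iff)
      show "red_adj kneser2_E {u,v} {{y,x}}"
      proof (cases "y \<in> {a,b}")
        case True
        have "kneser2_E v {y,x}" using True yx assms unfolding kneser2_E_def by auto
        moreover have "\<not> kneser2_E u {y,x}" using True assms unfolding kneser2_E_def by auto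
        ultimately show ?thesis using d unfolding red_adj_def by auto
      next
        case False
        then have "y \<in> {c,d}" using yx by auto
        have "kneser2_E u {y,x}" using \<open>y \<in> {c,d}\<close> yx assms unfolding kneser2_E_def by auto
        moreover have "\<not> kneser2_E v {y,x}" using \<open>y \<in> {c,d}\<close> assms unfolding kneser2_E_def by auto
        ultimately show ?thesis using d unfolding red_adj_def by auto
      qed
    qed
  qed
  moreover have "card {a,b,c,d} = 4" using assms by auto
  ultimately have "4 * (n - 4) \<le> red_deg kneser2_E (pair_partition ?V u v) {u,v}" by simp
  moreover have "2 * (n - 3) \<le> 4 * (n - 4)" using assms by simp
  ultimately show ?thesis by linarith
qed

lemma pp_lower:
  assumes "5 \<le> n" "u \<in> kneser2_V n" "v \<in> kneser2_V n" "u \<noteq> v"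
  shows "2 * (n - 3) \<le> max_red_deg kneser2_E (pair_partition (kneser2_V n) u v)"
proof -
  obtain a b where ab: "u = {a,b}" "1 \<le> a" "a < b" "b \<le> n" using assms(2) kV by blast
  obtain c d where cd: "v = {c,d}" "1 \<le> c" "c < d" "d \<le> n" using assms(3) kV by blast
  have R: "2 * (n - 3) \<le> red_deg kneser2_E (pair_partition (kneser2_V n) u v) {u,v}"
  proof -
    consider "a = c" | "a = d" | "b = c" | "b = d" | "a \<noteq> c" "a \<noteq> d" "b \<noteq> c" "b \<noteq> d" by blast
    then show ?thesis
    proof cases
      case 1
      then have "b \<noteq> d" using ab cd assms(4) by auto
      then show ?thesis using pp_inter[of a b d n u v] 1 ab cd by auto
    next
      case 2
      then show ?thesis using pp_inter[of a b c n u v] ab cd by (auto simp: insert_commute)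
    next
      case 3
      then show ?thesis using pp_inter[of b a d n u v] ab cd by (auto simp: insert_commute)
    next
      case 4
      then have "a \<noteq> c" using ab cd assms(4) by auto
      then show ?thesis using pp_inter[of b a c n u v] 4 ab cd by (auto simp: insert_commute)
    next
      case 5
      then show ?thesis using pp_disj[of a b c d n u v] ab cd assms(1) by auto
    qed
  qed
  also have "\<dots> \<le> max_red_deg kneser2_E (pair_partition (kneser2_V n) u v)"
    using pp_basic[OF assms(2-4)] by (intro red_deg_le_max) auto
  finally show ?thesis .
qed

lemma lb1_lower:
  assumes "5 \<le> n"
  shows "2 * (n - 3) \<le> lb1 (kneser2_V n) kneser2_E"
proof -
  let ?V = "kneser2_V n"
  let ?S = "{max_red_deg kneser2_E (pair_partition ?V u v) | u v. u \<in> ?V \<and> v \<in> ?V \<and> u \<noteq> v}"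
  have "?S \<subseteq> (\<lambda>(u,v). max_red_deg kneser2_E (pair_partition ?V u v)) ` (?V \<times> ?V)" by auto
  then have fS: "finite ?S" using finV by (meson finite_SigmaI finite_imageI finite_subset)
  have c2: "2 \<le> card ?V" using card_V2 assms by simp
  have "{1::nat,2} \<in> ?V" "{1::nat,3} \<in> ?V" "{1::nat,2} \<noteq> {1,3}"
    using assms unfolding kneser2_V_def by (auto simp: doubleton_eq_iff)
  then have ne: "?S \<noteq> {}" by blast
  have "\<forall>s\<in>?S. 2 * (n - 3) \<le> s" using pp_lower[OF assms] by blast
  then have "2 * (n - 3) \<le> Min ?S" using fS ne by simp
  then show ?thesis unfolding lb1_def using c2 by simp
qed



lemma E_big:
  assumes "u \<in> kneser2_V n" "x \<in> kneser2_V n" "kneser2_E u x"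
  shows "4 \<le> n"
proof -
  have u: "u \<subseteq> {1..n}" "card u = 2" and x: "x \<subseteq> {1..n}" "card x = 2"
    using assms unfolding kneser2_V_def by auto
  have d: "u \<inter> x = {}" using assms(3) unfolding kneser2_E_def by auto
  have fu: "finite u" "finite x" using u x finite_subset by blast+
  have "card (u \<union> x) = 4" using card_Un_disjoint[OF fu d] u x by simp
  moreover have "card (u \<union> x) \<le> card {1..n}" using u x by (intro card_mono) auto
  ultimately show ?thesis by simp
qed

lemma small_noedge:
  assumes "2 \<le> n" "n \<le> 3"
  shows "tww (kneser2_V n) kneser2_E \<le> 0" "\<exists>Ps. contraction_seq (kneser2_V n) Ps"
proof -
  have R: "reach kneser2_E 0 (singletons (kneser2_V n))"
  proof (rule reach_noedge[OF finV Vne[OF assms(1)]])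
    show "ptn (kneser2_V n) (singletons (kneser2_V n))" unfolding ptn_def singletons_def by auto
    show "\<forall>U\<in>singletons (kneser2_V n). \<forall>W\<in>singletons (kneser2_V n). U \<noteq> W \<longrightarrow> (\<forall>u\<in>U. \<forall>x\<in>W. \<not> kneser2_E u x)"
    proof (intro ballI impI)
      fix U W u x assume a: "U \<in> singletons (kneser2_V n)" "W \<in> singletons (kneser2_V n)" "u \<in> U" "x \<in> W"
      then have "u \<in> kneser2_V n" "x \<in> kneser2_V n" unfolding singletons_def by auto
      then show "\<not> kneser2_E u x" using E_big[of u n x] assms(2) by auto
    qed
  qed
  show "tww (kneser2_V n) kneser2_E \<le> 0" "\<exists>Ps. contraction_seq (kneser2_V n) Ps"
    using tww_le[OF R finV] by auto
qed

abbreviation V4 where "V4 \<equiv> kneser2_V 4"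

lemma compl4:
  assumes "u \<in> V4"
  shows "{1..4} - u \<in> V4" "{1..4} - ({1..4} - u) = u" "{1..4} - u \<noteq> u"
proof -
  have u: "u \<subseteq> {1..4}" "card u = 2" using assms unfolding kneser2_V_def by auto
  have "card ({1..4::nat} - u) = 2" using u card_Diff_subset[of u "{1..4::nat}"] finite_subset[OF u(1)] by simp
  then show "{1..4} - u \<in> V4" unfolding kneser2_V_def by auto
  show "{1..4} - ({1..4} - u) = u" using u by auto
  show "{1..4} - u \<noteq> u"
  proof
    assume h: "{1..4} - u = u"
    have "u = {}"
    proof (rule equals0I)
      fix y assume "y \<in> u"
      then have "y \<in> {1..4} - u" using h by simp
      then show False using \<open>y \<in> u\<close> by simp
    qed
    then show False using u(2) by simp
  qed
qed

lemma E4: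
  assumes "u \<in> V4" "x \<in> V4" "kneser2_E u x"
  shows "x = {1..4} - u"
proof -
  have u: "u \<subseteq> {1..4}" "card u = 2" and x: "x \<subseteq> {1..4}" "card x = 2"
    using assms unfolding kneser2_V_def by auto
  have d: "u \<inter> x = {}" using assms(3) unfolding kneser2_E_def by auto
  have s: "x \<subseteq> {1..4} - u" using x d by auto
  have "card ({1..4::nat} - u) = 2" using u card_Diff_subset[of u "{1..4::nat}"] finite_subset[OF u(1)] by simp
  then show ?thesis using s x by (intro card_subset_eq) auto
qed

lemma E_sym: "kneser2_E u x \<Longrightarrow> kneser2_E x u"
  unfolding kneser2_E_def by auto


definition Phi4 :: "nat set set set \<Rightarrow> bool" where
  "Phi4 P \<longleftrightarrow> ptn V4 P \<and> (\<forall>U\<in>P. (\<exists>s. U = {s}) \<or> (\<forall>S\<in>U. {1..4} - S \<in> U))"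

lemma Phi4_red:
  assumes "Phi4 P"
  shows "max_red_deg kneser2_E P \<le> 0"
proof (rule max_red_deg_le)
  have p: "ptn V4 P" using assms unfolding Phi4_def by auto
  show "finite P" using p finV unfolding ptn_def by (metis finite_UnionD)
  fix U assume U: "U \<in> P"
  have "\<not> red_adj kneser2_E U W" if W: "W \<in> P" for W
  proof
    assume r: "red_adj kneser2_E U W"
    then obtain u w where uw: "u \<in> U" "w \<in> W" "kneser2_E u w" "U \<noteq> W" unfolding red_adj_def by auto
    have dis: "U \<inter> W = {}" using p U W uw(4) unfolding ptn_def by auto
    have uV: "u \<in> V4" "w \<in> V4" using p U W uw unfolding ptn_def by auto
    have wc: "w = {1..4} - u" using E4[OF uV uw(3)] .
    have uc: "u = {1..4} - w" using wc compl4(2)[OF uV(1)] by simp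
    consider "\<exists>s. U = {s}" "\<exists>s. W = {s}" | "\<forall>S\<in>U. {1..4} - S \<in> U" | "\<forall>S\<in>W. {1..4} - S \<in> W"
      using assms U W unfolding Phi4_def by blast
    then show False
    proof cases
      case 1
      then have "U = {u}" "W = {w}" using uw by auto
      then show False using r uw(3) unfolding red_adj_def by auto
    next
      case 2
      then have "w \<in> U" using wc uw(1) by auto
      then show False using dis uw(2) by auto
    next
      case 3
      then have "u \<in> W" using uc uw(2) by auto
      then show False using dis uw(1) by auto
    qed
  qed
  then have "{W \<in> P. red_adj kneser2_E U W} = {}" by auto
  then show "red_deg kneser2_E P U \<le> 0" unfolding red_deg_def by (simp only: card.empty order_refl)
qed


lemma Phi4_reach: "Phi4 P \<Longrightarrow> reach kneser2_E 0 P"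
proof (induction "card P" arbitrary: P rule: less_induct)
  case less
  have p: "ptn V4 P" using less.prems unfolding Phi4_def by auto
  have pd: "\<And>A B. A \<in> P \<Longrightarrow> B \<in> P \<Longrightarrow> A \<noteq> B \<Longrightarrow> A \<inter> B = {}" using p unfolding ptn_def by blast
  have pU: "\<Union>P = V4" using p unfolding ptn_def by blast
  have ph: "\<And>U. U \<in> P \<Longrightarrow> (\<exists>t. U = {t}) \<or> (\<forall>S\<in>U. {1..4} - S \<in> U)"
    using less.prems unfolding Phi4_def by blast
  have fP: "finite P" using pU finV by (metis finite_UnionD)
  show ?case
  proof (cases "\<exists>s. {s} \<in> P")
    case True
    then obtain s where s: "{s} \<in> P" by blast
    have sV: "s \<in> V4" using pU s by blast
    let ?c = "{1..4} - s"
    have cV: "?c \<in> V4" "{1..4} - ?c = s" "?c \<noteq> s" using compl4[OF sV] by auto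
    have "?c \<in> \<Union>P" using pU cV(1) by simp
    then obtain W where W: "W \<in> P" "?c \<in> W" by blast
    have Wc: "W = {?c}"
    proof -
      have "W \<noteq> {s}" using W(2) cV(3) by auto
      then have "W \<inter> {s} = {}" using pd[OF W(1) s] by simp
      then have "s \<notin> W" by auto
      have "\<not> (\<forall>S\<in>W. {1..4} - S \<in> W)"
      proof
        assume h: "\<forall>S\<in>W. {1..4} - S \<in> W"
        have "{1..4} - ?c \<in> W" using h W(2) by blast
        then have "s \<in> W" by (simp only: cV(2))
        then show False using \<open>s \<notin> W\<close> by contradiction
      qed
      then obtain t where "W = {t}" using ph[OF W(1)] by blast
      then show ?thesis using W(2) by auto
    qed
    have cP: "{?c} \<in> P" using W(1) Wc by simp
    have neq: "{s} \<noteq> {?c}" using cV(3) by auto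
    define Q where "Q = insert ({s} \<union> {?c}) (P - {{s}, {?c}})"
    have ms: "merge_step P Q" unfolding merge_step_def Q_def
      by (rule bexI[of _ "{s}"], rule bexI[of _ "{?c}"]) (use neq cP s in \<open>simp_all only: simp_thms\<close>)
    have m: "ptn V4 Q" "card Q = card P - 1" using merge_ptn[OF p ms finV] by auto
    have "card P \<noteq> 0" using fP s by auto
    then have lt: "card Q < card P" using m by simp
    have "Phi4 Q"
      unfolding Phi4_def
    proof (intro conjI ballI)
      show "ptn V4 Q" using m by simp
      fix U assume "U \<in> Q"
      then consider "U = {s} \<union> {?c}" | "U \<in> P" unfolding Q_def by blast
      then show "(\<exists>t. U = {t}) \<or> (\<forall>S\<in>U. {1..4} - S \<in> U)"
      proof cases
        case 1
        have "\<forall>S\<in>U. {1..4} - S \<in> U"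
        proof
          fix S assume "S \<in> U"
          then have "S = s \<or> S = ?c" using 1 by blast
          then show "{1..4} - S \<in> U"
          proof
            assume "S = s" then show ?thesis using 1 by blast
          next
            assume "S = ?c" then have "{1..4} - S = s" using cV(2) by simp
            then show ?thesis using 1 by blast
          qed
        qed
        then show ?thesis by blast
      next
        case 2 then show ?thesis using ph by blast
      qed
    qed
    then have "reach kneser2_E 0 Q" using less.hyps[OF lt] by simp
    then show ?thesis by (rule reach.stp[OF ms Phi4_red[OF less.prems]])
  next
    case False
    show ?thesis
    proof (rule reach_noedge[OF finV Vne p])
      show "\<forall>U\<in>P. \<forall>W\<in>P. U \<noteq> W \<longrightarrow> (\<forall>u\<in>U. \<forall>x\<in>W. \<not> kneser2_E u x)"
      proof (intro ballI impI notI)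
        fix U W u x assume a: "U \<in> P" "W \<in> P" "U \<noteq> W" "u \<in> U" "x \<in> W" "kneser2_E u x"
        have "\<not> (\<exists>t. U = {t})" using False a(1) by auto
        then have cl: "\<forall>S\<in>U. {1..4} - S \<in> U" using ph[OF a(1)] by simp
        have uV: "u \<in> V4" "x \<in> V4" using pU a by auto
        have "x \<in> U" using E4[OF uV a(6)] cl a(4) by simp
        moreover have "U \<inter> W = {}" using pd[OF a(1,2,3)] .
        ultimately show False using a(5) by auto
      qed
    qed simp
  qed
qed

lemma four:
  shows "tww V4 kneser2_E \<le> 0" "\<exists>Ps. contraction_seq V4 Ps"
proof -
  have "Phi4 (singletons V4)" unfolding Phi4_def ptn_def singletons_def by auto
  then have R: "reach kneser2_E 0 (singletons V4)" by (rule Phi4_reach)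
  show "tww V4 kneser2_E \<le> 0" "\<exists>Ps. contraction_seq V4 Ps"
    using tww_le[OF R finV] by auto
qed

lemma card_V_2: "card (kneser2_V 2) = 1"
proof -
  have "kneser2_V 2 = {{1,2}}"
  proof
    show "kneser2_V 2 \<subseteq> {{1,2}}"
    proof
      fix S assume "S \<in> kneser2_V 2"
      then obtain a b where "S = {a,b}" "1 \<le> a" "a < b" "b \<le> (2::nat)" using kV by blast
      then have "a = 1" "b = 2" by auto
      then show "S \<in> {{1,2}}" using \<open>S = {a,b}\<close> by simp
    qed
    show "{{1,2}} \<subseteq> kneser2_V 2" unfolding kneser2_V_def by auto
  qed
  then show ?thesis by simp
qed

theorem mainTheorem7:
  fixes n :: nat
  assumes "n \<ge> 2"
  shows "tww (kneser2_V n) kneser2_E = lb1 (kneser2_V n) kneser2_E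
       \<and> tww (kneser2_V n) kneser2_E = (if n \<ge> 5 then 2 * (n - 3) else 0)"
proof (cases "n \<ge> 5")
  case True
  have a: "tww (kneser2_V n) kneser2_E \<le> 2*(n-3)" "\<exists>Ps. contraction_seq (kneser2_V n) Ps"
    using upper5[OF True] by auto
  have b: "lb1 (kneser2_V n) kneser2_E \<le> tww (kneser2_V n) kneser2_E"
    using tww_ge_lb1[OF finV card_V2 a(2)] True by simp
  have c: "2 * (n - 3) \<le> lb1 (kneser2_V n) kneser2_E" using lb1_lower[OF True] .
  show ?thesis using a b c True by simp
next
  case False
  have t0: "tww (kneser2_V n) kneser2_E = 0" and ex: "\<exists>Ps. contraction_seq (kneser2_V n) Ps"
  proof -
    have "tww (kneser2_V n) kneser2_E \<le> 0 \<and> (\<exists>Ps. contraction_seq (kneser2_V n) Ps)"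
    proof (cases "n = 4")
      case True then show ?thesis using four by simp
    next
      case False
      then have "n \<le> 3" using \<open>\<not> 5 \<le> n\<close> by simp
      then show ?thesis using small_noedge[OF assms] by simp
    qed
    then show "tww (kneser2_V n) kneser2_E = 0" "\<exists>Ps. contraction_seq (kneser2_V n) Ps" by auto
  qed
  have l0: "lb1 (kneser2_V n) kneser2_E = 0"
  proof (cases "n = 2")
    case True then show ?thesis unfolding lb1_def using card_V_2 by simp
  next
    case False
    then have "3 \<le> n" using assms by simp
    then have "lb1 (kneser2_V n) kneser2_E \<le> tww (kneser2_V n) kneser2_E"
      using tww_ge_lb1[OF finV card_V2 ex] by simp
    then show ?thesis using t0 by simp
  qed
  show ?thesis using t0 l0 False by simp
qed

end
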